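(* Consider $N$ classical particles with Hamiltonian $$H=\sum_{i=1}^N\frac{(\mathbf p_i-q_i\boldsymbol A(\mathbf x_i))^2}{2m_i}+\sum_{i<j}v(|\mathbf x_i-\mathbf x_j|),$$ where $v$ is a pair potential and $\boldsymbol A$ is a vector potential of a constant magnetic field $\boldsymbol B=\nabla\times\boldsymbol A$. Choose an orthonormal coordinate frame whose third axis is parallel to $\boldsymbol B$. For every $a,b\in\mathbb R$ with $a^2+b^2=1$ let $$\mathcal M_m=\begin{pmatrix}a&b&0\\ b&-a&0\\0&0&1\end{pmatrix}$$ (so $\mathcal M_m\in O(3)$, $\mathcal M_m^2=I$, $\det\mathcal M_m=-1$), and let $\mathcal M$ act on each particle as $(\mathbf x_i,\mathbf p_i)\mapsto(\mathcal M_m\mathbf x_i,-\mathcal M_m\mathbf p_i)$. Then each such $\mathcal M$ is a time reversal operation under which the dynamics is time reversal invariant; in particular the dynamics is invariant under infinitely many time reversal operations.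
   Context: A time reversal operation is a linear antisymplectic involution of phase space. Time reversal invariance under $\mathcal M$ means the Hamiltonian is preserved up to a gauge transformation: there is a smooth $G:\mathbb R^3\to\mathbb R$ such that $H(\mathcal M\Gamma)$ equals $H(\Gamma)$ with $\boldsymbol A$ replaced by $\boldsymbol A+\nabla G$, for all $\Gamma$. *)

theory Defs
  imports "HOL-Analysis.Analysis"
begin

text \<open>Phase space of N particles: each particle (indexed by the finite linearly ordered
type 'n, so N = CARD('n)) carries a position and a momentum in R^3.\<close>

type_synonym 'n phase = "((real^3) \<times> (real^3))^'n"

definition pos :: "'n::finite phase \<Rightarrow> 'n \<Rightarrow> real^3" where
  "pos \<Gamma> i = fst (\<Gamma> $ i)"

definition mom :: "'n::finite phase \<Rightarrow> 'n \<Rightarrow> real^3" where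
  "mom \<Gamma> i = snd (\<Gamma> $ i)"

fun diter :: "(real^3 \<Rightarrow> 'b::real_normed_vector) \<Rightarrow> (real^3) list \<Rightarrow> real^3 \<Rightarrow> 'b" where
  "diter f [] = f"
| "diter f (v # vs) = (\<lambda>x. frechet_derivative (diter f vs) (at x) v)"

definition smooth :: "(real^3 \<Rightarrow> 'b::real_normed_vector) \<Rightarrow> bool" where
  "smooth f \<longleftrightarrow> (\<forall>vs x. diter f vs differentiable (at x))"

definition pd :: "(real^3 \<Rightarrow> real^3) \<Rightarrow> 3 \<Rightarrow> 3 \<Rightarrow> real^3 \<Rightarrow> real" where
  "pd A i j x = frechet_derivative A (at x) (axis j 1) $ i"

definition grad :: "(real^3 \<Rightarrow> real) \<Rightarrow> real^3 \<Rightarrow> real^3" where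
  "grad G x = (\<chi> k. frechet_derivative G (at x) (axis k 1))"

definition curl :: "(real^3 \<Rightarrow> real^3) \<Rightarrow> real^3 \<Rightarrow> real^3" where
  "curl A x = vector [pd A 3 2 x - pd A 2 3 x, pd A 1 3 x - pd A 3 1 x, pd A 2 1 x - pd A 1 2 x]"

definition hamiltonian ::
  "('n::{finite,linorder} \<Rightarrow> real) \<Rightarrow> ('n \<Rightarrow> real) \<Rightarrow> (real \<Rightarrow> real) \<Rightarrow> (real^3 \<Rightarrow> real^3)
     \<Rightarrow> 'n phase \<Rightarrow> real" where
  "hamiltonian m q v A \<Gamma> =
     (\<Sum>i\<in>UNIV. (norm (mom \<Gamma> i - q i *\<^sub>R A (pos \<Gamma> i)))\<^sup>2 / (2 * m i))
     + (\<Sum>(i,j)\<in>{(i,j). i < j}. v (norm (pos \<Gamma> i - pos \<Gamma> j)))"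

definition symp :: "'n::finite phase \<Rightarrow> 'n phase \<Rightarrow> real" where
  "symp \<Gamma> \<Gamma>' = (\<Sum>i\<in>UNIV. pos \<Gamma> i \<bullet> mom \<Gamma>' i - mom \<Gamma> i \<bullet> pos \<Gamma>' i)"

definition time_reversal_op :: "('n::finite phase \<Rightarrow> 'n phase) \<Rightarrow> bool" where
  "time_reversal_op T \<longleftrightarrow> linear T \<and> T \<circ> T = id \<and>
     (\<forall>\<Gamma> \<Gamma>'. symp (T \<Gamma>) (T \<Gamma>') = - symp \<Gamma> \<Gamma>')"

text \<open>Time reversal invariance under T: H is preserved up to a gauge transformation.\<close>

definition tr_invariant ::
  "('n::{finite,linorder} \<Rightarrow> real) \<Rightarrow> ('n \<Rightarrow> real) \<Rightarrow> (real \<Rightarrow> real) \<Rightarrow> (real^3 \<Rightarrow> real^3)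
     \<Rightarrow> ('n phase \<Rightarrow> 'n phase) \<Rightarrow> bool" where
  "tr_invariant m q v A T \<longleftrightarrow>
     (\<exists>G :: real^3 \<Rightarrow> real. smooth G \<and>
        (\<forall>\<Gamma>. hamiltonian m q v A (T \<Gamma>) = hamiltonian m q v (\<lambda>x. A x + grad G x) \<Gamma>))"

definition Mm :: "real \<Rightarrow> real \<Rightarrow> real^3^3" where
  "Mm a b = vector [vector [a, b, 0], vector [b, -a, 0], vector [0, 0, 1]]"

definition Mphase :: "real \<Rightarrow> real \<Rightarrow> 'n::finite phase \<Rightarrow> 'n phase" where
  "Mphase a b \<Gamma> = (\<chi> i. (Mm a b *v pos \<Gamma> i, - (Mm a b *v mom \<Gamma> i)))"

end

theory Submission
  imports Defs
begin


lemma potential: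
  fixes F :: "real^3 \<Rightarrow> real^3" and DF :: "real^3 \<Rightarrow> real^3 \<Rightarrow> real^3"
  assumes deriv: "\<And>x. (F has_derivative DF x) (at x)"
    and cont: "\<And>v. continuous_on UNIV (\<lambda>x. DF x v)"
    and sym: "\<And>x u w. DF x u \<bullet> w = DF x w \<bullet> u"
  shows "\<exists>G. \<forall>x. (G has_derivative (\<lambda>h. F x \<bullet> h)) (at x)"
proof -
  have bl: "bounded_linear (DF y)" for y using deriv has_derivative_bounded_linear by blast
  have lin: "linear (DF y)" for y using bl bounded_linear.linear by blast
  have contF: "continuous_on UNIV F"
    using deriv by (meson continuous_at_imp_continuous_on has_derivative_continuous)
  define f where "f x t = F (t *\<^sub>R x) \<bullet> x" for x :: "real^3" and t :: real
  define g where "g x t h = t * (DF (t *\<^sub>R x) h \<bullet> x) + F (t *\<^sub>R x) \<bullet> h" for x :: "real^3" and t :: real and h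
  have blg: "bounded_linear (g x t)" for x t
    unfolding g_def
    by (intro bounded_linear_add bounded_linear_const_mult bounded_linear_inner_right
        bounded_linear_compose[OF bounded_linear_inner_left bl])
  define fx where "fx x t = Blinfun (g x t)" for x t
  have fx_apply: "blinfun_apply (fx x t) = g x t" for x t
    unfolding fx_def using blg by (simp add: bounded_linear_Blinfun_apply)
  have dfx: "((\<lambda>x. f x t) has_derivative blinfun_apply (fx x t)) (at x within UNIV)" for x t
  proof -
    have d1: "((\<lambda>x. F (t *\<^sub>R x)) has_derivative (\<lambda>h. DF (t *\<^sub>R x) (t *\<^sub>R h))) (at x)"
      by (rule has_derivative_compose[of "\<lambda>x. t *\<^sub>R x", OF _ deriv])
         (auto intro!: derivative_eq_intros)
    have "((\<lambda>x. F (t *\<^sub>R x) \<bullet> x) has_derivative (\<lambda>h. F (t *\<^sub>R x) \<bullet> h + DF (t *\<^sub>R x) (t *\<^sub>R h) \<bullet> x)) (at x)"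
      by (rule has_derivative_inner[OF d1 has_derivative_ident, THEN has_derivative_eq_rhs]) auto
    moreover have "(\<lambda>h. F (t *\<^sub>R x) \<bullet> h + DF (t *\<^sub>R x) (t *\<^sub>R h) \<bullet> x) = g x t"
      by (auto simp: g_def linear_cmul[OF lin] fun_eq_iff)
    ultimately show ?thesis by (simp add: fx_apply f_def)
  qed
  have contg: "continuous_on UNIV (\<lambda>(x, t). g x t h)" for h
  proof -
    have c1: "continuous_on UNIV (\<lambda>y::(real^3)\<times>real. snd y *\<^sub>R fst y)"
      by (intro continuous_intros)
    have c2: "continuous_on UNIV (\<lambda>y::(real^3)\<times>real. DF (snd y *\<^sub>R fst y) h)"
      by (rule continuous_on_compose2[OF cont c1]) auto
    have c3: "continuous_on UNIV (\<lambda>y::(real^3)\<times>real. F (snd y *\<^sub>R fst y))"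
      by (rule continuous_on_compose2[OF contF c1]) auto
    show ?thesis unfolding g_def case_prod_beta
      by (intro continuous_intros c2 c3)
  qed
  have contfx: "continuous_on (UNIV \<times> cbox 0 1) (\<lambda>(x, t). fx x t)"
    by (rule continuous_on_blinfun_componentwise, rule continuous_on_subset[OF _ subset_UNIV])
       (simp add: case_prod_beta fx_apply contg[unfolded case_prod_beta])
  have contf: "continuous_on UNIV (\<lambda>t. f x t)" for x
    unfolding f_def by (intro continuous_intros continuous_on_compose2[OF contF]) auto
  have intf: "f x integrable_on cbox 0 1" for x
    by (rule integrable_continuous, rule continuous_on_subset[OF contf]) auto
  have contgt: "continuous_on UNIV (\<lambda>t. g x t h)" for x h
    using continuous_on_compose2[OF contg[of h], where f="\<lambda>t. (x, t)" and s=UNIV]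
    by (simp add: continuous_on_Pair continuous_on_const continuous_on_id)
  have intfx: "fx x integrable_on cbox 0 1" for x
  proof -
    have "continuous_on (cbox 0 1) (fx x)"
      using continuous_on_compose2[OF contfx, where f="\<lambda>t. (x, t)" and s="cbox 0 1"]
      by (auto simp add: continuous_on_Pair continuous_on_const continuous_on_id)
    then show ?thesis by (rule integrable_continuous)
  qed
  have key: "integral (cbox 0 1) (\<lambda>t. g x t h) = F x \<bullet> h" for x h
  proof -
    have "((\<lambda>t. t * (F (t *\<^sub>R x) \<bullet> h)) has_vector_derivative g x t h) (at t within {0..1})" for t
    proof -
      have d1: "((\<lambda>t. F (t *\<^sub>R x)) has_derivative (\<lambda>s. DF (t *\<^sub>R x) (s *\<^sub>R x))) (at t within {0..1})"
        by (rule has_derivative_compose[of "\<lambda>t. t *\<^sub>R x", OF _ has_derivative_at_withinI[OF deriv]])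
           (auto intro!: derivative_eq_intros)
      have "((\<lambda>t. t * (F (t *\<^sub>R x) \<bullet> h)) has_derivative
          (\<lambda>s. t * (DF (t *\<^sub>R x) (s *\<^sub>R x) \<bullet> h) + s * (F (t *\<^sub>R x) \<bullet> h))) (at t within {0..1})"
        by (auto intro!: derivative_eq_intros d1)
      moreover have "(\<lambda>s. t * (DF (t *\<^sub>R x) (s *\<^sub>R x) \<bullet> h) + s * (F (t *\<^sub>R x) \<bullet> h)) = (\<lambda>s. s *\<^sub>R g x t h)"
        by (auto simp: g_def linear_cmul[OF lin] fun_eq_iff sym[of _ h x] algebra_simps)
      ultimately show ?thesis by (simp add: has_vector_derivative_def)
    qed
    from fundamental_theorem_of_calculus[OF _ this]
    have "((\<lambda>t. g x t h) has_integral (F x \<bullet> h)) {0..1}" by simp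
    then show ?thesis by (simp add: integral_unique)
  qed
  define G where "G x = integral (cbox 0 1) (f x)" for x
  have "(G has_derivative (\<lambda>h. F x \<bullet> h)) (at x)" for x
  proof -
    have "(G has_derivative blinfun_apply (integral (cbox 0 1) (fx x))) (at x within UNIV)"
      unfolding G_def
      by (rule leibniz_rule[OF dfx intf contfx]) auto
    moreover have "blinfun_apply (integral (cbox 0 1) (fx x)) = (\<lambda>h. F x \<bullet> h)"
      using blinfun_apply_integral[OF intfx] key by (simp add: fx_apply fun_eq_iff)
    ultimately show ?thesis by simp
  qed
  then show ?thesis by blast
qed



lemma diter_snoc: "diter f (vs @ [v]) = diter (diter f [v]) vs"
  by (induction vs) auto

lemma smooth_diff: "smooth f \<Longrightarrow> f differentiable (at x)"
  unfolding smooth_def by (metis diter.simps(1))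

lemma smooth_diter: "smooth f \<Longrightarrow> smooth (diter f [v])"
  unfolding smooth_def by (metis diter_snoc)

lemma smoothI:
  assumes "\<And>x. f differentiable (at x)" "\<And>v. smooth (diter f [v])"
  shows "smooth f"
  unfolding smooth_def
proof (intro allI)
  fix vs x show "diter f vs differentiable at x"
  proof (cases vs rule: rev_cases)
    case Nil then show ?thesis using assms(1) by simp
  next
    case (snoc ys y) then show ?thesis using assms(2)[of y] by (simp add: diter_snoc smooth_def)
  qed
qed

lemma smooth_deriv: "smooth f \<Longrightarrow> (f has_derivative (\<lambda>h. diter f [h] x)) (at x)"
  using smooth_diff[of f x] frechet_derivative_works by auto

lemma smooth_cont: "smooth f \<Longrightarrow> continuous_on UNIV f"
  by (meson continuous_at_imp_continuous_on differentiable_imp_continuous_within smooth_diff)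

lemma smooth_linear_comp:
  fixes L :: "'a::real_normed_vector \<Rightarrow> 'b::real_normed_vector"
  assumes L: "bounded_linear L" and f: "smooth f"
  shows "smooth (\<lambda>x. L (f x))"
proof -
  have eq: "diter (\<lambda>x. L (f x)) vs = (\<lambda>x. L (diter f vs x))" for vs
  proof (induction vs)
    case (Cons w vs)
    have "frechet_derivative (\<lambda>x. L (diter f vs x)) (at x) w = L (diter f (w # vs) x)" for x
    proof -
      have "(diter f vs has_derivative frechet_derivative (diter f vs) (at x)) (at x)"
        using f unfolding smooth_def using frechet_derivative_works by blast
      from bounded_linear.has_derivative[OF L this]
      show ?thesis by (simp add: frechet_derivative_at[symmetric])
    qed
    then show ?case by (simp only: diter.simps Cons.IH)
  qed simp
  show ?thesis unfolding smooth_def eq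
  proof (intro allI)
    fix vs x
    have "(diter f vs has_derivative frechet_derivative (diter f vs) (at x)) (at x)"
      using f unfolding smooth_def using frechet_derivative_works by blast
    from bounded_linear.has_derivative[OF L this]
    show "(\<lambda>x. L (diter f vs x)) differentiable at x" by (auto simp: differentiable_def)
  qed
qed

lemma smooth_comp_linear:
  fixes M :: "real^3 \<Rightarrow> real^3" and f :: "real^3 \<Rightarrow> 'b::real_normed_vector"
  assumes M: "linear M" and f: "smooth f"
  shows "smooth (\<lambda>x. f (M x))"
proof -
  have bM: "bounded_linear M" using M linear_conv_bounded_linear by blast
  have dM: "(M has_derivative M) (at x)" for x using bM by (rule bounded_linear_imp_has_derivative)
  have D: "((\<lambda>x. diter f vs (M x)) has_derivative (\<lambda>h. frechet_derivative (diter f vs) (at (M x)) (M h))) (at x)" for vs x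
  proof -
    have "(diter f vs has_derivative frechet_derivative (diter f vs) (at (M x))) (at (M x))"
      using f unfolding smooth_def using frechet_derivative_works by blast
    from has_derivative_compose[OF dM this] show ?thesis by (simp add: o_def)
  qed
  have eq: "diter (\<lambda>x. f (M x)) vs = (\<lambda>x. diter f (map M vs) (M x))" for vs
  proof (induction vs)
    case (Cons w vs)
    have "frechet_derivative (\<lambda>x. diter f (map M vs) (M x)) (at x) = (\<lambda>h. frechet_derivative (diter f (map M vs)) (at (M x)) (M h))" for x
      using D[of "map M vs" x] by (rule frechet_derivative_at[symmetric])
    then show ?case by (simp only: diter.simps Cons.IH list.map)
  qed simp
  show ?thesis unfolding smooth_def eq using D by (auto simp: differentiable_def)
qed

lemma smooth_add:
  fixes f g :: "real^3 \<Rightarrow> 'b::real_normed_vector"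
  assumes f: "smooth f" and g: "smooth g"
  shows "smooth (\<lambda>x. f x + g x)"
proof -
  have D: "((\<lambda>x. diter f vs x + diter g vs x) has_derivative
      (\<lambda>h. frechet_derivative (diter f vs) (at x) h + frechet_derivative (diter g vs) (at x) h)) (at x)" for vs x
  proof -
    have "(diter f vs has_derivative frechet_derivative (diter f vs) (at x)) (at x)"
      using f unfolding smooth_def using frechet_derivative_works by blast
    moreover have "(diter g vs has_derivative frechet_derivative (diter g vs) (at x)) (at x)"
      using g unfolding smooth_def using frechet_derivative_works by blast
    ultimately show ?thesis by (rule has_derivative_add)
  qed
  have eq: "diter (\<lambda>x. f x + g x) vs = (\<lambda>x. diter f vs x + diter g vs x)" for vs
  proof (induction vs)
    case (Cons w vs)
    have "frechet_derivative (\<lambda>x. diter f vs x + diter g vs x) (at x) = (\<lambda>h. frechet_derivative (diter f vs) (at x) h + frechet_derivative (diter g vs) (at x) h)" for x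
      using D[of vs x] by (rule frechet_derivative_at[symmetric])
    then show ?case by (simp only: diter.simps Cons.IH)
  qed simp
  show ?thesis unfolding smooth_def eq using D by (auto simp: differentiable_def)
qed



lemma Mm_mult: "Mm a b *v y = vector [a * y$1 + b * y$2, b * y$1 - a * y$2, y$3]"
  by (simp add: vec_eq_iff forall_3 Mm_def matrix_vector_mult_def sum_3)

lemma Mm_comp [simp]:
  "(Mm a b *v y)$1 = a * y$1 + b * y$2" "(Mm a b *v y)$2 = b * y$1 - a * y$2" "(Mm a b *v y)$3 = y$3"
  by (simp_all add: Mm_mult)

lemma inner3: "(x::real^3) \<bullet> y = x$1 * y$1 + x$2 * y$2 + x$3 * y$3"
  by (simp add: inner_vec_def sum_3)

lemma Mm_sym: "(Mm a b *v y) \<bullet> w = y \<bullet> (Mm a b *v w)"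
  by (simp add: inner3 algebra_simps)

lemma Mm_sq: "a\<^sup>2 + b\<^sup>2 = 1 \<Longrightarrow> Mm a b *v (Mm a b *v y) = y"
proof -
  assume h: "a\<^sup>2 + b\<^sup>2 = 1"
  have e1: "a * (a * y$1 + b * y$2) + b * (b * y$1 - a * y$2) = (a\<^sup>2 + b\<^sup>2) * y$1"
    by (simp add: algebra_simps power2_eq_square)
  have e2: "b * (a * y$1 + b * y$2) - a * (b * y$1 - a * y$2) = (a\<^sup>2 + b\<^sup>2) * y$2"
    by (simp add: algebra_simps power2_eq_square)
  show ?thesis using e1 e2 h by (simp add: vec_eq_iff forall_3)
qed

lemma decomp3: "(u::real^3) = u$1 *\<^sub>R axis 1 1 + u$2 *\<^sub>R axis 2 1 + u$3 *\<^sub>R axis 3 1"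
  by (simp add: vec_eq_iff forall_3 axis_def)

lemma curl_antisym:
  fixes A :: "real^3 \<Rightarrow> real^3"
  assumes d: "(A has_derivative D) (at x)" and c: "curl A x = vector [0, 0, B0]"
  shows "D u \<bullet> w - D w \<bullet> u = B0 * (u$1 * w$2 - u$2 * w$1)"
proof -
  have lin: "linear D" using d has_derivative_linear by blast
  have pd: "pd A i j x = D (axis j 1) $ i" for i j
    unfolding pd_def using frechet_derivative_at[OF d] by simp
  have c1: "pd A 3 2 x - pd A 2 3 x = 0" and c2: "pd A 1 3 x - pd A 3 1 x = 0"
    and c3: "pd A 2 1 x - pd A 1 2 x = B0"
    using arg_cong[OF c, of "\<lambda>v. v$1"] arg_cong[OF c, of "\<lambda>v. v$2"] arg_cong[OF c, of "\<lambda>v. v$3"]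
    by (simp_all add: curl_def)
  have Dexp: "D v = v$1 *\<^sub>R D (axis 1 1) + v$2 *\<^sub>R D (axis 2 1) + v$3 *\<^sub>R D (axis 3 1)" for v
    by (subst decomp3[of v]) (simp add: linear_add[OF lin] linear_cmul[OF lin])
  show ?thesis
    using c1 c2 c3 unfolding pd
    by (simp add: Dexp[of u] Dexp[of w] inner3 algebra_simps)
qed



lemma mv_neg: "(A::real^3^3) *v (- x) = - (A *v x)"
  by (simp add: vec_eq_iff matrix_vector_mult_def sum_negf)

lemma Mm_inner: "a\<^sup>2 + b\<^sup>2 = 1 \<Longrightarrow> (Mm a b *v x) \<bullet> (Mm a b *v y) = x \<bullet> y"
  by (simp add: Mm_sym Mm_sq)

lemma Mm_norm: "a\<^sup>2 + b\<^sup>2 = 1 \<Longrightarrow> norm (Mm a b *v x) = norm x"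
  by (simp add: norm_eq_sqrt_inner Mm_inner)

lemma pos_M [simp]: "pos (Mphase a b \<Gamma>) i = Mm a b *v pos \<Gamma> i"
  by (simp add: Mphase_def pos_def)

lemma mom_M [simp]: "mom (Mphase a b \<Gamma>) i = - (Mm a b *v mom \<Gamma> i)"
  by (simp add: Mphase_def mom_def)

lemma Mm_matrix_sq: "a\<^sup>2 + b\<^sup>2 = 1 \<Longrightarrow> Mm a b ** Mm a b = mat 1"
  by (simp add: matrix_eq matrix_vector_mul_assoc[symmetric] Mm_sq)

lemma Mm_transpose: "transpose (Mm a b) = Mm a b"
  by (simp add: Mm_def vec_eq_iff forall_3 transpose_def)

lemma Mm_orth: "a\<^sup>2 + b\<^sup>2 = 1 \<Longrightarrow> orthogonal_matrix (Mm a b)"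
  by (simp add: orthogonal_matrix_def Mm_transpose Mm_matrix_sq)

lemma Mm_det: "a\<^sup>2 + b\<^sup>2 = 1 \<Longrightarrow> det (Mm a b) = -1"
  by (simp add: det_3 Mm_def power2_eq_square algebra_simps)

lemma Mphase_tr: "a\<^sup>2 + b\<^sup>2 = 1 \<Longrightarrow> time_reversal_op (Mphase a b :: 'n::finite phase \<Rightarrow> 'n phase)"
  unfolding time_reversal_op_def
proof (intro conjI allI)
  assume h: "a\<^sup>2 + b\<^sup>2 = 1"
  show "linear (Mphase a b :: 'n::finite phase \<Rightarrow> 'n phase)"
    by (rule linearI)
       (simp_all add: Mphase_def pos_def mom_def vec_eq_iff matrix_vector_right_distrib
          matrix_vector_mult_scaleR)
  show "Mphase a b \<circ> Mphase a b = (id :: 'n phase \<Rightarrow> 'n phase)"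
    by (simp add: fun_eq_iff Mphase_def vec_eq_iff pos_def mom_def mv_neg Mm_sq[OF h])
  fix \<Gamma> \<Gamma>' :: "'n phase"
  show "symp (Mphase a b \<Gamma>) (Mphase a b \<Gamma>') = - symp \<Gamma> \<Gamma>'"
    by (simp add: symp_def Mm_inner[OF h] sum_negf[symmetric])
qed

lemma Mphase_inv:
  fixes m q :: "'n::{finite,linorder} \<Rightarrow> real" and v :: "real \<Rightarrow> real"
    and A :: "real^3 \<Rightarrow> real^3" and B0 :: real
  assumes h: "a\<^sup>2 + b\<^sup>2 = 1" and A_smooth: "smooth A"
    and B_const: "\<And>x. curl A x = vector [0, 0, B0]"
  shows "tr_invariant m q v A (Mphase a b)"
proof -
  define M where "M = Mm a b"
  have lM: "bounded_linear ((*v) M)"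
    using matrix_vector_mul_linear linear_conv_bounded_linear by blast
  define DA where "DA x = frechet_derivative A (at x)" for x
  have hasA: "(A has_derivative DA x) (at x)" for x
    unfolding DA_def using smooth_diff[OF A_smooth] frechet_derivative_works by blast
  define F where "F x = A x + M *v A (M *v x)" for x
  define DF where "DF x h = DA x h + M *v DA (M *v x) (M *v h)" for x h
  have dF: "(F has_derivative DF x) (at x)" for x
  proof -
    have "((\<lambda>x. A (M *v x)) has_derivative (\<lambda>h. DA (M *v x) (M *v h))) (at x)"
      using has_derivative_compose[OF bounded_linear_imp_has_derivative[OF lM] hasA]
      by (simp add: o_def)
    from bounded_linear.has_derivative[OF lM this]
    have "((\<lambda>x. M *v A (M *v x)) has_derivative (\<lambda>h. M *v DA (M *v x) (M *v h))) (at x)" .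
    from has_derivative_add[OF hasA this] show ?thesis
      unfolding F_def DF_def by simp
  qed
  have dA_diter: "DA x w = diter A [w] x" for x w by (simp add: DA_def)
  have contD: "continuous_on UNIV (\<lambda>x. DF x w)" for w
  proof -
    have c1: "continuous_on UNIV (diter A [u])" for u
      by (rule smooth_cont[OF smooth_diter[OF A_smooth]])
    have c2: "continuous_on UNIV (\<lambda>x. diter A [M *v w] (M *v x))"
      by (rule continuous_on_compose2[OF c1 bounded_linear.continuous_on[OF lM continuous_on_id]]) auto
    have c3: "continuous_on UNIV (\<lambda>x. M *v diter A [M *v w] (M *v x))"
      by (rule bounded_linear.continuous_on[OF lM c2])
    show ?thesis unfolding DF_def dA_diter
      by (intro continuous_on_add c1 c3)
  qed
  have symD: "DF x u \<bullet> w = DF x w \<bullet> u" for x u w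
  proof -
    define om where "om = u$1 * w$2 - u$2 * w$1"
    have e1: "DA x u \<bullet> w - DA x w \<bullet> u = B0 * om"
      unfolding om_def by (rule curl_antisym[OF hasA B_const])
    have e2: "DA (M *v x) (M *v u) \<bullet> (M *v w) - DA (M *v x) (M *v w) \<bullet> (M *v u)
        = B0 * ((M *v u)$1 * (M *v w)$2 - (M *v u)$2 * (M *v w)$1)"
      by (rule curl_antisym[OF hasA B_const])
    have om: "(M *v u)$1 * (M *v w)$2 - (M *v u)$2 * (M *v w)$1 = - (a\<^sup>2 + b\<^sup>2) * om"
      unfolding M_def om_def by (simp add: algebra_simps power2_eq_square)
    have e2': "DA (M *v x) (M *v u) \<bullet> (M *v w) - DA (M *v x) (M *v w) \<bullet> (M *v u) = - (B0 * om)"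
      using e2 unfolding om h by simp
    have s1: "(M *v DA (M *v x) (M *v u)) \<bullet> w = DA (M *v x) (M *v u) \<bullet> (M *v w)"
      unfolding M_def by (rule Mm_sym)
    have s2: "(M *v DA (M *v x) (M *v w)) \<bullet> u = DA (M *v x) (M *v w) \<bullet> (M *v u)"
      unfolding M_def by (rule Mm_sym)
    show ?thesis
      unfolding DF_def inner_add_left s1 s2 using e1 e2' by linarith
  qed
  obtain G0 where G0: "\<And>x. (G0 has_derivative (\<lambda>h. F x \<bullet> h)) (at x)"
    using potential[OF dF contD symD] by blast
  define G where "G x = - G0 x" for x
  have dG: "(G has_derivative (\<lambda>h. - (F x \<bullet> h))) (at x)" for x
    unfolding G_def by (rule has_derivative_minus[OF G0])
  have fdG: "frechet_derivative G (at x) = (\<lambda>h. - (F x \<bullet> h))" for x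
    using frechet_derivative_at[OF dG] by simp
  have gradG: "grad G x = - F x" for x
    by (simp add: grad_def fdG vec_eq_iff inner_axis)
  have smG: "smooth G"
  proof (rule smoothI)
    show "G differentiable at x" for x using dG by (auto simp: differentiable_def)
    fix w
    have eq: "diter G [w] = (\<lambda>x. (\<lambda>y. - (y \<bullet> w)) (A x) + (\<lambda>y. - ((M *v y) \<bullet> w)) (A (M *v x)))"
      by (simp add: fdG fun_eq_iff F_def inner_add_left)
    have b1: "bounded_linear (\<lambda>y::real^3. - (y \<bullet> w))"
      by (intro bounded_linear_minus bounded_linear_inner_left)
    have b2: "bounded_linear (\<lambda>y::real^3. - ((M *v y) \<bullet> w))"
      by (intro bounded_linear_minus bounded_linear_compose[OF bounded_linear_inner_left lM])
    show "smooth (diter G [w])" unfolding eq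
      by (intro smooth_add smooth_linear_comp[OF b1 A_smooth] smooth_linear_comp[OF b2]
          smooth_comp_linear[OF matrix_vector_mul_linear A_smooth])
  qed
  have AG: "A x + grad G x = - (M *v A (M *v x))" for x
    by (simp add: gradG F_def)
  have kin: "norm (- (M *v p) - c *\<^sub>R A (M *v x)) = norm (p - c *\<^sub>R (- (M *v A (M *v x))))" for p x c
  proof -
    have "- (M *v p) - c *\<^sub>R A (M *v x) = - (M *v (p + c *\<^sub>R (M *v A (M *v x))))"
      by (simp add: M_def matrix_vector_right_distrib matrix_vector_mult_scaleR Mm_sq[OF h])
    then show ?thesis by (simp add: M_def Mm_norm[OF h])
  qed
  have pot: "norm (M *v x - M *v y) = norm (x - y)" for x y
    by (simp add: M_def matrix_vector_mult_diff_distrib[symmetric] Mm_norm[OF h])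
  show ?thesis
    unfolding tr_invariant_def
  proof (intro exI conjI allI)
    show "smooth G" by (rule smG)
    fix \<Gamma> :: "'n phase"
    show "hamiltonian m q v A (Mphase a b \<Gamma>) = hamiltonian m q v (\<lambda>x. A x + grad G x) \<Gamma>"
      unfolding hamiltonian_def AG
      by (simp add: M_def[symmetric] kin pot)
  qed
qed

lemma Mphase_infinite: "infinite {Mphase a b :: 'n::finite phase \<Rightarrow> 'n phase | a b. a\<^sup>2 + b\<^sup>2 = 1}"
proof
  assume fin: "finite {Mphase a b :: 'n::finite phase \<Rightarrow> 'n phase | a b. a\<^sup>2 + b\<^sup>2 = 1}"
  define h where "h t = (Mphase t (sqrt (1 - t\<^sup>2)) :: 'n phase \<Rightarrow> 'n phase)" for t
  have sub: "h ` {0..1} \<subseteq> {Mphase a b :: 'n::finite phase \<Rightarrow> 'n phase | a b. a\<^sup>2 + b\<^sup>2 = 1}"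
  proof
    fix f assume "f \<in> h ` {0..1}"
    then obtain t where t: "t \<in> {0..1}" "f = h t" by auto
    then have "t\<^sup>2 \<le> 1" by (simp add: power_le_one)
    then have "t\<^sup>2 + (sqrt (1 - t\<^sup>2))\<^sup>2 = 1" by simp
    then show "f \<in> {Mphase a b | a b. a\<^sup>2 + b\<^sup>2 = 1}" using t unfolding h_def by blast
  qed
  define \<Gamma>0 :: "'n phase" where "\<Gamma>0 = (\<chi> i. (axis 1 1, 0))"
  have key: "pos (h t \<Gamma>0) i $ 1 = t" for t i
    by (simp add: h_def) (simp add: \<Gamma>0_def pos_def axis_def)
  have "inj_on h {0..1}"
    by (rule inj_onI) (metis key)
  then have "finite ({0..1} :: real set)"
    using finite_subset[OF sub fin] finite_image_iff by blast
  then show False using infinite_Icc[of "0::real" 1] by simp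
qed

theorem mainTheorem13:
  fixes m q :: "'n::{finite,linorder} \<Rightarrow> real"
    and v :: "real \<Rightarrow> real"
    and A :: "real^3 \<Rightarrow> real^3"
    and B0 :: real
  assumes mass_pos: "\<And>i. m i > 0"
    and A_smooth: "smooth A"
    and B_const: "\<And>x. curl A x = vector [0, 0, B0]"
  shows "(\<forall>a b. a\<^sup>2 + b\<^sup>2 = 1 \<longrightarrow>
            orthogonal_matrix (Mm a b) \<and> Mm a b ** Mm a b = mat 1 \<and> det (Mm a b) = -1 \<and>
            time_reversal_op (Mphase a b :: 'n phase \<Rightarrow> 'n phase) \<and>
            tr_invariant m q v A (Mphase a b))
         \<and> infinite {Mphase a b :: 'n phase \<Rightarrow> 'n phase | a b. a\<^sup>2 + b\<^sup>2 = 1}"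
  using Mm_orth Mm_matrix_sq Mm_det Mphase_tr Mphase_inv[OF _ A_smooth B_const] Mphase_infinite
  by blast

end
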